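(* Assume (A5) and fix $k\in[\underline{\theta}_1,\overline{\theta}_1]$. For $2\le t\le T$, let $F^A_t$ be the conditional distribution of $\theta_t$ given $\theta_1\ge k$ if $k<\overline{\theta}_1$ and given $\theta_1=\overline{\theta}_1$ if $k=\overline{\theta}_1$; let $F^R_t$ be the conditional distribution of $\theta_t$ given $\theta_1<k$ if $k>\underline{\theta}_1$ and given $\theta_1=\underline{\theta}_1$ if $k=\underline{\theta}_1$. Let $p^A_t$ and $p^R_t$ be monopoly prices (maximizers of $p(1-F(p))$) for $F=F^A_t$ and $F=F^R_t$, respectively. Then $p^A_t\ge p^R_t$ for every $2\le t\le T$.
   Context: (A5) Log-concave AR(1): $\theta_1\sim F_1$, a log-concave distribution with bounded support $[\underline{\theta}_1,\overline{\theta}_1]\subset\mathbb{R}_+$ and density $f_1>0$ on it; for $t\ge2$, $\theta_t=\alpha_t\theta_{t-1}+\epsilon_t$ with $\alpha_t\in(0,\frac1{2\delta})$ for a fixed $\delta\in(0,1]$, and $\epsilon_t$ drawn independently from a log-concave distribution $G_t$ with bounded support. *)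

theory Defs
  imports "HOL-Probability.Probability"
begin

definition log_concave :: "(real \<Rightarrow> real) \<Rightarrow> bool" where
  "log_concave f \<longleftrightarrow> (\<forall>x. 0 \<le> f x) \<and>
     (\<forall>x y l. 0 < l \<and> l < 1 \<longrightarrow>
        f x powr l * f y powr (1 - l) \<le> f (l * x + (1 - l) * y))"

text \<open>Sample path of the AR(1) process started from theta_1 = x with innovations e:
  theta_1 = x, theta_t = alpha_t theta_(t-1) + e_t for t >= 2 (index 0 unused, = x).\<close>
primrec ar_path :: "(nat \<Rightarrow> real) \<Rightarrow> (nat \<Rightarrow> real) \<Rightarrow> real \<Rightarrow> nat \<Rightarrow> real" where
  "ar_path \<alpha> e x 0 = x"
| "ar_path \<alpha> e x (Suc n) = (if n = 0 then x else \<alpha> (Suc n) * ar_path \<alpha> e x n + e (Suc n))"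

definition revenue_maximizer :: "(real \<Rightarrow> real) \<Rightarrow> real \<Rightarrow> bool" where
  "revenue_maximizer F p \<longleftrightarrow> (\<forall>q. q * (1 - F q) \<le> p * (1 - F p))"

definition monopoly_price :: "(real \<Rightarrow> real) \<Rightarrow> real \<Rightarrow> bool" where
  "monopoly_price F p \<longleftrightarrow> revenue_maximizer F p \<and> (\<forall>q. revenue_maximizer F q \<longrightarrow> p \<le> q)"

end

theory Submission
  imports Defs
begin


definition lc2 :: "(real \<Rightarrow> real) \<Rightarrow> bool" where
  "lc2 g \<longleftrightarrow> (\<forall>x d e. 0 \<le> d \<longrightarrow> 0 \<le> e \<longrightarrow> g x * g (x + d + e) \<le> g (x + d) * g (x + e))"

lemma powr_split1: "(a::real) \<ge> 0 \<Longrightarrow> a powr l * a powr (1 - l) = a"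
  by (metis add_diff_cancel_left' powr_add powr_one_gt_zero_iff powr_one' diff_add_cancel)

lemma lc2_of_log_concave:
  assumes "log_concave g" shows "lc2 g"
  unfolding lc2_def
proof (intro allI impI)
  fix x d e :: real assume d: "0 \<le> d" and e: "0 \<le> e"
  have nn: "\<And>x. 0 \<le> g x" using assms unfolding log_concave_def by auto
  show "g x * g (x + d + e) \<le> g (x + d) * g (x + e)"
  proof (cases "d = 0 \<or> e = 0")
    case True then show ?thesis by (auto simp: mult.commute)
  next
    case False
    with d e have dp: "0 < d" and ep: "0 < e" by auto
    define l where "l = e / (d + e)"
    have l0: "0 < l" and l1: "l < 1" using dp ep by (auto simp: l_def field_simps)
    have l': "1 - l = d / (d + e)" using dp ep by (simp add: l_def field_simps)
    have de: "d + e \<noteq> 0" using dp ep by auto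
    have m1: "(1 - l) * (d + e) = d" unfolding l' using de by simp
    have m2: "l * (d + e) = e" unfolding l_def using de by simp
    have h1: "l * x + (1 - l) * (x + d + e) = x + d"
    proof -
      have "l * x + (1 - l) * (x + d + e) = x + (1 - l) * (d + e)" by (simp add: algebra_simps)
      then show ?thesis using m1 by simp
    qed
    have h2: "(1 - l) * x + (1 - (1 - l)) * (x + d + e) = x + e"
    proof -
      have "(1 - l) * x + (1 - (1 - l)) * (x + d + e) = x + l * (d + e)" by (simp add: algebra_simps)
      then show ?thesis using m2 by simp
    qed
    have A: "g x powr l * g (x + d + e) powr (1 - l) \<le> g (x + d)"
      using assms l0 l1 h1 unfolding log_concave_def by metis
    have B: "g x powr (1 - l) * g (x + d + e) powr (1 - (1 - l)) \<le> g (x + e)"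
      using assms l0 l1 h2 unfolding log_concave_def
      by (metis diff_gt_0_iff_gt diff_less_eq less_add_same_cancel1)
    have "g x * g (x + d + e) = (g x powr l * g (x + d + e) powr (1 - l)) * (g x powr (1 - l) * g (x + d + e) powr (1 - (1 - l)))"
      using powr_split1[OF nn[of x], of l] powr_split1[OF nn[of "x+d+e"], of "1-l"]
      by (simp add: algebra_simps)
    also have "\<dots> \<le> g (x + d) * g (x + e)"
      using A B nn by (intro mult_mono) auto
    finally show ?thesis .
  qed
qed



lemma revenue_lemma:
  fixes SA SR :: "real \<Rightarrow> real" and pA pR :: real
  assumes monoA: "\<And>x y. x \<le> y \<Longrightarrow> SA y \<le> SA x"
    and nnA: "\<And>x. 0 \<le> SA x" and nnR: "\<And>x. 0 \<le> SR x"
    and tp2: "\<And>p q. p \<le> q \<Longrightarrow> SA p * SR q \<le> SA q * SR p"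
    and dom: "\<And>q. SR q \<le> SA q"
    and maxA: "\<And>q. q * SA q \<le> pA * SA pA"
    and maxR: "\<And>q. q * SR q \<le> pR * SR pR"
    and minR: "\<And>q. (\<forall>x. x * SR x \<le> q * SR q) \<Longrightarrow> pR \<le> q"
  shows "pR \<le> pA"
proof (rule ccontr)
  assume "\<not> pR \<le> pA"
  hence lt: "pA < pR" by simp
  have key: "pR * SR pR \<le> pA * SR pA"
  proof -
    have A0: "0 \<le> pA * SA pA" using maxA[of 0] by simp
    have R0: "0 \<le> pR * SR pR" using maxR[of 0] by simp
    show ?thesis
    proof (cases "pA * SA pA = 0")
      case True
      have "SA pR = 0"
      proof (cases "pA < 0")
        case True
        then have "SA pA = 0" using \<open>pA * SA pA = 0\<close> by simp
        then show ?thesis using monoA[of pA pR] lt nnA[of pR] by simp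
      next
        case False
        then have "0 < pR" using lt by simp
        have "pR * SA pR \<le> 0" using maxA[of pR] True by simp
        then show ?thesis using \<open>0 < pR\<close> nnA[of pR]
          by (simp add: mult_le_0_iff)
      qed
      then have "SR pR = 0" using dom[of pR] nnR[of pR] by simp
      moreover have "0 \<le> pA * SR pA"
      proof (cases "pA < 0")
        case True
        then have "SA pA = 0" using \<open>pA * SA pA = 0\<close> by simp
        then have "SR pA = 0" using dom[of pA] nnR[of pA] by simp
        then show ?thesis by simp
      next
        case False then show ?thesis using nnR[of pA] by simp
      qed
      ultimately show ?thesis by simp
    next
      case False
      then have "0 < pA * SA pA" using A0 by linarith
      then have pA0: "0 < pA" and sA: "0 < SA pA" using nnA[of pA]
        by (auto simp: zero_less_mult_iff)
      then have pR0: "0 < pR" using lt by simp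
      have t: "SA pA * SR pR \<le> SA pR * SR pA" using tp2[of pA pR] lt by simp
      have m: "pR * SA pR \<le> pA * SA pA" using maxA[of pR] .
      have "SA pA * (pR * SR pR) = pR * (SA pA * SR pR)" by (simp add: algebra_simps)
      also have "\<dots> \<le> pR * (SA pR * SR pA)" using t pR0 by (intro mult_left_mono) auto
      also have "\<dots> = (pR * SA pR) * SR pA" by (simp add: algebra_simps)
      also have "\<dots> \<le> (pA * SA pA) * SR pA" using m nnR[of pA] by (intro mult_right_mono) auto
      also have "\<dots> = SA pA * (pA * SR pA)" by (simp add: algebra_simps)
      finally show ?thesis using sA by simp
    qed
  qed
  have "\<forall>x. x * SR x \<le> pA * SR pA" using maxR key order_trans by blast
  then have "pR \<le> pA" using minR by blast
  then show False using lt by simp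
qed



lemma pair_lborel: "pair_sigma_finite lborel lborel"
  by (simp add: pair_sigma_finite_def lborel.sigma_finite_measure_axioms)

lemma prod_int:
  fixes f1 f2 :: "real \<Rightarrow> real"
  assumes i1: "integrable lborel f1" and i2: "integrable lborel f2"
  shows "integrable (lborel \<Otimes>\<^sub>M lborel) (\<lambda>(x,y). f1 x * f2 y)"
    and "(\<integral>z. (case z of (x,y) \<Rightarrow> f1 x * f2 y) \<partial>(lborel \<Otimes>\<^sub>M lborel)) = (\<integral>x. f1 x \<partial>lborel) * (\<integral>x. f2 x \<partial>lborel)"
proof -
  have m1[measurable]: "f1 \<in> borel_measurable lborel" using i1 by auto
  have m2[measurable]: "f2 \<in> borel_measurable lborel" using i2 by auto
  show I: "integrable (lborel \<Otimes>\<^sub>M lborel) (\<lambda>(x,y). f1 x * f2 y)"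
  proof (rule lborel_pair.Fubini_integrable)
    show "(\<lambda>(x,y). f1 x * f2 y) \<in> borel_measurable (lborel \<Otimes>\<^sub>M lborel)" by measurable
    have "(\<lambda>x. \<integral>y. norm (case (x, y) of (x, y) \<Rightarrow> f1 x * f2 y) \<partial>lborel) = (\<lambda>x. \<bar>f1 x\<bar> * (\<integral>y. \<bar>f2 y\<bar> \<partial>lborel))"
      by (simp add: abs_mult)
    moreover have "integrable lborel (\<lambda>x. \<bar>f1 x\<bar> * (\<integral>y. \<bar>f2 y\<bar> \<partial>lborel))"
      using i1 by (intro integrable_mult_left integrable_abs)
    ultimately show "integrable lborel (\<lambda>x. \<integral>y. norm (case (x, y) of (x, y) \<Rightarrow> f1 x * f2 y) \<partial>lborel)" by simp
    show "AE x in lborel. integrable lborel (\<lambda>y. case (x, y) of (x, y) \<Rightarrow> f1 x * f2 y)"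
      using i2 by simp
  qed
  have "(\<integral>x. (\<integral>y. f1 x * f2 y \<partial>lborel) \<partial>lborel) = integral\<^sup>L (lborel \<Otimes>\<^sub>M lborel) (\<lambda>(x, y). f1 x * f2 y)"
    by (rule lborel_pair.integral_fst) (use I in simp)
  moreover have "(\<integral>x. (\<integral>y. f1 x * f2 y \<partial>lborel) \<partial>lborel) = (\<integral>x. f1 x \<partial>lborel) * (\<integral>x. f2 x \<partial>lborel)"
    by simp
  ultimately show "(\<integral>z. (case z of (x,y) \<Rightarrow> f1 x * f2 y) \<partial>(lborel \<Otimes>\<^sub>M lborel)) = (\<integral>x. f1 x \<partial>lborel) * (\<integral>x. f2 x \<partial>lborel)"
    by simp
qed



definition good :: "(real \<Rightarrow> real) \<Rightarrow> (real \<Rightarrow> real) \<Rightarrow> real \<Rightarrow> real \<Rightarrow> bool" where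
  "good a r PA PR \<longleftrightarrow> (\<forall>x y. x \<le> y \<longrightarrow> a y \<le> a x \<and> r y \<le> r x)
     \<and> (\<forall>x. 0 \<le> a x \<and> a x \<le> PA \<and> 0 \<le> r x \<and> r x \<le> PR)
     \<and> (\<forall>p q. p \<le> q \<longrightarrow> a p * r q \<le> a q * r p)
     \<and> (\<forall>q. PA * r q \<le> a q * PR)"

lemma antimono_meas:
  fixes a :: "real \<Rightarrow> real"
  assumes "\<And>x y. x \<le> y \<Longrightarrow> a y \<le> a x"
  shows "a \<in> borel_measurable borel"
proof -
  have "mono (\<lambda>x. - a x)" using assms by (auto simp: mono_def)
  then have "(\<lambda>x. - a x) \<in> borel_measurable borel" by (rule borel_measurable_mono)
  then have "(\<lambda>x. - (- a x)) \<in> borel_measurable borel" by measurable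
  then show ?thesis by simp
qed

lemma integ_bdd:
  fixes f g :: "real \<Rightarrow> real"
  assumes fm: "f \<in> borel_measurable borel" and fb: "\<And>x. \<bar>f x\<bar> \<le> B"
    and gi: "integrable lborel g"
  shows "integrable lborel (\<lambda>e. f e * g e)"
proof (rule Bochner_Integration.integrable_bound[where f="\<lambda>e. B * g e"])
  show "integrable lborel (\<lambda>e. B * g e)" using gi by simp
  have [measurable]: "g \<in> borel_measurable borel" using gi by auto
  show "(\<lambda>e. f e * g e) \<in> borel_measurable lborel" using fm by simp
  have B0: "0 \<le> B" using fb[of 0] by simp
  show "AE x in lborel. norm (f x * g x) \<le> norm (B * g x)"
    using fb B0 by (auto simp: abs_mult intro!: mult_right_mono)
qed

lemma change_var:
  fixes f g :: "real \<Rightarrow> real"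
  assumes c: "0 < c"
  shows "(\<integral>e. f ((x - e) / c) * g e \<partial>lborel) = c * (\<integral>y. f y * g (x - c * y) \<partial>lborel)"
proof -
  have "(\<integral>e. f ((x - e) / c) * g e \<partial>lborel) = \<bar>- c\<bar> *\<^sub>R (\<integral>y. f ((x - (x + - c * y)) / c) * g (x + - c * y) \<partial>lborel)"
    using c by (intro lborel_integral_real_affine) simp
  also have "(\<lambda>y. f ((x - (x + - c * y)) / c) * g (x + - c * y)) = (\<lambda>y. f y * g (x - c * y))"
    using c by (auto simp: fun_eq_iff)
  finally show ?thesis using c by simp
qed

lemma integ_shift:
  fixes f g :: "real \<Rightarrow> real"
  assumes fm: "f \<in> borel_measurable borel" and fb: "\<And>x. \<bar>f x\<bar> \<le> B"
    and gi: "integrable lborel g" and c: "0 < c"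
  shows "integrable lborel (\<lambda>y. f y * g (x - c * y))"
proof (rule integ_bdd[OF fm fb])
  have "integrable lborel (\<lambda>y. g (x + (- c) * y))"
    using gi c by (intro lborel_integrable_real_affine) auto
  then show "integrable lborel (\<lambda>y. g (x - c * y))" by simp
qed

lemma integ_shift2:
  fixes f g :: "real \<Rightarrow> real"
  assumes fm: "f \<in> borel_measurable borel" and fb: "\<And>x. \<bar>f x\<bar> \<le> B"
    and gi: "integrable lborel g" and c: "0 < c"
  shows "integrable lborel (\<lambda>e. f ((x - e) / c) * g e)"
proof (rule integ_bdd[OF _ _ gi])
  show "(\<lambda>e. f ((x - e) / c)) \<in> borel_measurable borel" using fm by measurable
  show "\<And>e. \<bar>f ((x - e) / c)\<bar> \<le> B" using fb by simp
qed



lemma tp2_point: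
  fixes a r g :: "real \<Rightarrow> real"
  assumes tp: "\<And>p q. p \<le> q \<Longrightarrow> a p * r q \<le> a q * r p"
    and lc: "lc2 g" and c: "0 < c" and pq: "p \<le> q"
  shows "0 \<le> (a y * r z - a z * r y) * (g (q - c * y) * g (p - c * z) - g (p - c * y) * g (q - c * z))"
proof -
  have L: "\<And>x d e. 0 \<le> d \<Longrightarrow> 0 \<le> e \<Longrightarrow> g x * g (x + d + e) \<le> g (x + d) * g (x + e)"
    using lc unfolding lc2_def by blast
  show ?thesis
proof (cases "z \<le> y")
  case True
  have 1: "0 \<le> a y * r z - a z * r y" using tp[OF True] by simp
  have "g (p - c * y) * g (p - c * y + (q - p) + c * (y - z)) \<le> g (p - c * y + (q - p)) * g (p - c * y + c * (y - z))"
    using pq True c by (intro L) auto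
  then have "g (p - c * y) * g (q - c * z) \<le> g (q - c * y) * g (p - c * z)"
    by (simp add: algebra_simps)
  then have 2: "0 \<le> g (q - c * y) * g (p - c * z) - g (p - c * y) * g (q - c * z)" by simp
  show ?thesis using 1 2 by simp
next
  case False
  then have zy: "y \<le> z" by simp
  have 1: "a y * r z - a z * r y \<le> 0" using tp[OF zy] by simp
  have "g (p - c * z) * g (p - c * z + (q - p) + c * (z - y)) \<le> g (p - c * z + (q - p)) * g (p - c * z + c * (z - y))"
    using pq zy c by (intro L) auto
  then have "g (p - c * z) * g (q - c * y) \<le> g (q - c * z) * g (p - c * y)"
    by (simp add: algebra_simps)
  then have 2: "g (q - c * y) * g (p - c * z) - g (p - c * y) * g (q - c * z) \<le> 0" by (simp add: mult.commute)
  show ?thesis using 1 2 by (simp add: mult_nonpos_nonpos)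
qed
qed

lemma tp2_compose:
  fixes a r g :: "real \<Rightarrow> real"
  assumes am: "a \<in> borel_measurable borel" and rm: "r \<in> borel_measurable borel"
    and ab: "\<And>x. \<bar>a x\<bar> \<le> B" and rb: "\<And>x. \<bar>r x\<bar> \<le> B"
    and tp: "\<And>p q. p \<le> q \<Longrightarrow> a p * r q \<le> a q * r p"
    and lc: "lc2 g" and gi: "integrable lborel g" and c: "0 < c" and pq: "p \<le> q"
  shows "(\<integral>y. a y * g (p - c * y) \<partial>lborel) * (\<integral>y. r y * g (q - c * y) \<partial>lborel)
       \<le> (\<integral>y. a y * g (q - c * y) \<partial>lborel) * (\<integral>y. r y * g (p - c * y) \<partial>lborel)"
proof -
  define ia where "ia x = (\<lambda>y. a y * g (x - c * y))" for x
  define ir where "ir x = (\<lambda>y. r y * g (x - c * y))" for x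
  have iai: "integrable lborel (ia x)" for x unfolding ia_def using integ_shift[OF am ab gi c] .
  have iri: "integrable lborel (ir x)" for x unfolding ir_def using integ_shift[OF rm rb gi c] .
  let ?M = "lborel \<Otimes>\<^sub>M lborel"
  define F1 where "F1 = (\<lambda>(y,z). ia q y * ir p z)"
  define F1' where "F1' = (\<lambda>(y,z). ir p y * ia q z)"
  define F2 where "F2 = (\<lambda>(y,z). ia p y * ir q z)"
  define F2' where "F2' = (\<lambda>(y,z). ir q y * ia p z)"
  have I1: "integrable ?M F1" "integral\<^sup>L ?M F1 = integral\<^sup>L lborel (ia q) * integral\<^sup>L lborel (ir p)"
    unfolding F1_def using prod_int[OF iai iri] by auto
  have I1': "integrable ?M F1'" "integral\<^sup>L ?M F1' = integral\<^sup>L lborel (ir p) * integral\<^sup>L lborel (ia q)"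
    unfolding F1'_def using prod_int[OF iri iai] by auto
  have I2: "integrable ?M F2" "integral\<^sup>L ?M F2 = integral\<^sup>L lborel (ia p) * integral\<^sup>L lborel (ir q)"
    unfolding F2_def using prod_int[OF iai iri] by auto
  have I2': "integrable ?M F2'" "integral\<^sup>L ?M F2' = integral\<^sup>L lborel (ir q) * integral\<^sup>L lborel (ia p)"
    unfolding F2'_def using prod_int[OF iri iai] by auto
  have "integral\<^sup>L ?M (\<lambda>w. (F1 w + F1' w) - (F2 w + F2' w))
      = (integral\<^sup>L ?M F1 + integral\<^sup>L ?M F1') - (integral\<^sup>L ?M F2 + integral\<^sup>L ?M F2')"
    using I1 I1' I2 I2' by simp
  moreover have "0 \<le> integral\<^sup>L ?M (\<lambda>w. (F1 w + F1' w) - (F2 w + F2' w))"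
  proof (rule integral_nonneg_AE, rule AE_I2)
    fix w :: "real \<times> real"
    obtain y z where w: "w = (y, z)" by (cases w)
    have "(F1 w + F1' w) - (F2 w + F2' w) = (a y * r z - a z * r y) * (g (q - c * y) * g (p - c * z) - g (p - c * y) * g (q - c * z))"
      unfolding w F1_def F1'_def F2_def F2'_def ia_def ir_def by (simp add: algebra_simps)
    then show "0 \<le> (F1 w + F1' w) - (F2 w + F2' w)" using tp2_point[OF tp lc c pq] by simp
  qed
  ultimately have "integral\<^sup>L lborel (ia p) * integral\<^sup>L lborel (ir q) \<le> integral\<^sup>L lborel (ia q) * integral\<^sup>L lborel (ir p)"
    using I1 I1' I2 I2' by (simp add: algebra_simps)
  then show ?thesis unfolding ia_def ir_def .
qed


lemma compose_good:
  fixes a r g :: "real \<Rightarrow> real"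
  assumes good: "good a r PA PR" and c: "0 < c" and lc: "lc2 g" and gnn: "\<And>x. 0 \<le> g x"
    and gi: "integrable lborel g" and g1: "integral\<^sup>L lborel g = 1"
  shows "good (\<lambda>x. \<integral>e. a ((x - e) / c) * g e \<partial>lborel) (\<lambda>x. \<integral>e. r ((x - e) / c) * g e \<partial>lborel) PA PR"
proof -
  have mono: "\<And>x y. x \<le> y \<Longrightarrow> a y \<le> a x \<and> r y \<le> r x"
    and bnd: "\<And>x. 0 \<le> a x \<and> a x \<le> PA \<and> 0 \<le> r x \<and> r x \<le> PR"
    and tp: "\<And>p q. p \<le> q \<Longrightarrow> a p * r q \<le> a q * r p"
    and dom: "\<And>q. PA * r q \<le> a q * PR"
    using good unfolding good_def by auto
  have am: "a \<in> borel_measurable borel" using mono by (intro antimono_meas) auto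
  have rm: "r \<in> borel_measurable borel" using mono by (intro antimono_meas) auto
  have ab: "\<bar>a x\<bar> \<le> PA + PR" for x using bnd[of x] bnd[of 0] by auto
  have rb: "\<bar>r x\<bar> \<le> PA + PR" for x using bnd[of x] bnd[of 0] by auto
  have ia: "integrable lborel (\<lambda>e. a ((x - e) / c) * g e)" for x by (rule integ_shift2[OF am ab gi c])
  have ir: "integrable lborel (\<lambda>e. r ((x - e) / c) * g e)" for x by (rule integ_shift2[OF rm rb gi c])
  define A where "A x = (\<integral>e. a ((x - e) / c) * g e \<partial>lborel)" for x
  define R where "R x = (\<integral>e. r ((x - e) / c) * g e \<partial>lborel)" for x
  have mA: "A y \<le> A x \<and> R y \<le> R x" if "x \<le> y" for x y
  proof
    show "A y \<le> A x" unfolding A_def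
    proof (rule integral_mono[OF ia ia])
      fix e have "(x - e) / c \<le> (y - e) / c" using that c by (simp add: divide_right_mono)
      then show "a ((y - e) / c) * g e \<le> a ((x - e) / c) * g e" using mono gnn by (intro mult_right_mono) auto
    qed
    show "R y \<le> R x" unfolding R_def
    proof (rule integral_mono[OF ir ir])
      fix e have "(x - e) / c \<le> (y - e) / c" using that c by (simp add: divide_right_mono)
      then show "r ((y - e) / c) * g e \<le> r ((x - e) / c) * g e" using mono gnn by (intro mult_right_mono) auto
    qed
  qed
  have bA: "0 \<le> A x \<and> A x \<le> PA \<and> 0 \<le> R x \<and> R x \<le> PR" for x
  proof (intro conjI)
    show "0 \<le> A x" unfolding A_def using bnd gnn by (intro integral_nonneg_AE AE_I2) auto
    show "0 \<le> R x" unfolding R_def using bnd gnn by (intro integral_nonneg_AE AE_I2) auto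
    have "A x \<le> (\<integral>e. PA * g e \<partial>lborel)" unfolding A_def
      using bnd gnn by (intro integral_mono[OF ia]) (auto intro!: mult_right_mono simp: gi)
    then show "A x \<le> PA" using g1 by simp
    have "R x \<le> (\<integral>e. PR * g e \<partial>lborel)" unfolding R_def
      using bnd gnn by (intro integral_mono[OF ir]) (auto intro!: mult_right_mono simp: gi)
    then show "R x \<le> PR" using g1 by simp
  qed
  have tA: "A p * R q \<le> A q * R p" if pq: "p \<le> q" for p q
  proof -
    have eA: "A x = c * (\<integral>y. a y * g (x - c * y) \<partial>lborel)" for x unfolding A_def by (rule change_var[OF c])
    have eR: "R x = c * (\<integral>y. r y * g (x - c * y) \<partial>lborel)" for x unfolding R_def by (rule change_var[OF c])
    have "(\<integral>y. a y * g (p - c * y) \<partial>lborel) * (\<integral>y. r y * g (q - c * y) \<partial>lborel)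
       \<le> (\<integral>y. a y * g (q - c * y) \<partial>lborel) * (\<integral>y. r y * g (p - c * y) \<partial>lborel)"
      by (rule tp2_compose[OF am rm ab rb tp lc gi c pq])
    then have "(c * c) * ((\<integral>y. a y * g (p - c * y) \<partial>lborel) * (\<integral>y. r y * g (q - c * y) \<partial>lborel))
       \<le> (c * c) * ((\<integral>y. a y * g (q - c * y) \<partial>lborel) * (\<integral>y. r y * g (p - c * y) \<partial>lborel))"
      using c by (intro mult_left_mono) auto
    then show ?thesis unfolding eA eR by (simp add: algebra_simps)
  qed
  have dA: "PA * R q \<le> A q * PR" for q
  proof -
    have "PA * R q = (\<integral>e. PA * (r ((q - e) / c) * g e) \<partial>lborel)" unfolding R_def by simp
    also have "\<dots> \<le> (\<integral>e. a ((q - e) / c) * g e * PR \<partial>lborel)"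
    proof (rule integral_mono)
      show "integrable lborel (\<lambda>e. PA * (r ((q - e) / c) * g e))" using ir by simp
      show "integrable lborel (\<lambda>e. a ((q - e) / c) * g e * PR)" using ia by simp
      fix e
      have "PA * r ((q - e) / c) * g e \<le> a ((q - e) / c) * PR * g e"
        using dom gnn by (intro mult_right_mono) auto
      then show "PA * (r ((q - e) / c) * g e) \<le> a ((q - e) / c) * g e * PR" by (simp add: algebra_simps)
    qed
    also have "\<dots> = A q * PR" unfolding A_def by simp
    finally show ?thesis .
  qed
  show ?thesis unfolding good_def A_def[symmetric] R_def[symmetric]
    using mA bA tA dA by blast
qed

lemma indep_emeasure:
  fixes Z :: "'a \<Rightarrow> real \<times> real" and X :: "'a \<Rightarrow> real" and g :: "real \<Rightarrow> real"
    and Q :: "((real \<times> real) \<times> real) set"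
  assumes M: "prob_space M" and ind: "prob_space.indep_var M borel Z borel (\<lambda>\<omega>. (X \<omega>, 0::real))"
    and dX: "distributed M lborel X (\<lambda>x. ennreal (g x))"
    and Q: "Q \<in> sets (borel \<Otimes>\<^sub>M borel)"
  shows "emeasure M {\<omega>\<in>space M. (Z \<omega>, X \<omega>) \<in> Q}
       = (\<integral>\<^sup>+ e. ennreal (g e) * emeasure M {\<omega>\<in>space M. (Z \<omega>, e) \<in> Q} \<partial>lborel)"
proof -
  interpret prob_space M by (rule M)
  let ?X2 = "\<lambda>\<omega>. (X \<omega>, 0::real)"
  have Zm[measurable]: "Z \<in> borel_measurable M" using indep_var_rv1[OF ind] .
  have Xm[measurable]: "X \<in> borel_measurable M" using distributed_measurable[OF dX] by simp
  have X2m[measurable]: "?X2 \<in> borel_measurable M" by measurable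
  have eq: "distr M borel Z \<Otimes>\<^sub>M distr M borel ?X2 = distr M (borel \<Otimes>\<^sub>M borel) (\<lambda>x. (Z x, ?X2 x))"
    using ind unfolding indep_var_distribution_eq by blast
  interpret PZ: prob_space "distr M borel Z" by (rule prob_space_distr) simp
  interpret PX: prob_space "distr M borel ?X2" by (rule prob_space_distr) simp
  interpret PP: pair_sigma_finite "distr M borel Z" "distr M borel ?X2" by unfold_locales
  define Q' where "Q' = (\<lambda>(z::real\<times>real, w::real\<times>real). (z, fst w)) -` Q \<inter> space (borel \<Otimes>\<^sub>M borel)"
  have fm: "(\<lambda>(z::real\<times>real, w::real\<times>real). (z, fst w)) \<in> measurable (borel \<Otimes>\<^sub>M borel) (borel \<Otimes>\<^sub>M borel)"
    by (simp add: borel_prod[symmetric]) measurable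
  have Q'm: "Q' \<in> sets (borel \<Otimes>\<^sub>M borel)" unfolding Q'_def using measurable_sets[OF fm Q] by simp
  have Q'': "Q' \<in> sets (distr M borel Z \<Otimes>\<^sub>M distr M borel ?X2)" using Q'm by simp
  have dXb: "distr M borel X = density lborel (\<lambda>x. ennreal (g x))"
  proof -
    have "distr M borel X = distr M lborel X" by (rule distr_cong) auto
    then show ?thesis using distributed_distr_eq_density[OF dX] by simp
  qed
  have dX2: "distr M borel ?X2 = distr (distr M borel X) borel (\<lambda>x. (x, 0::real))"
    by (subst distr_distr) (auto simp: comp_def)
  have gm: "(\<lambda>x. ennreal (g x)) \<in> borel_measurable lborel" using distributed_borel_measurable[OF dX] .
  have "emeasure M {\<omega>\<in>space M. (Z \<omega>, X \<omega>) \<in> Q} = emeasure M ((\<lambda>x. (Z x, ?X2 x)) -` Q' \<inter> space M)"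
    unfolding Q'_def by (intro arg_cong[where f="emeasure M"]) (auto simp: space_pair_measure)
  also have "\<dots> = emeasure (distr M (borel \<Otimes>\<^sub>M borel) (\<lambda>x. (Z x, ?X2 x))) Q'"
    using Q'm by (subst emeasure_distr) auto
  also have "\<dots> = emeasure (distr M borel Z \<Otimes>\<^sub>M distr M borel ?X2) Q'" using eq by simp
  also have "\<dots> = (\<integral>\<^sup>+y. emeasure (distr M borel Z) ((\<lambda>x. (x, y)) -` Q') \<partial>distr M borel ?X2)"
    by (rule PP.emeasure_pair_measure_alt2[OF Q''])
  also have "\<dots> = (\<integral>\<^sup>+y. emeasure (distr M borel Z) ((\<lambda>x. (x, (y, 0::real))) -` Q') \<partial>distr M borel X)"
    unfolding dX2 using PP.measurable_emeasure_Pair2[OF Q'']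
    by (subst nn_integral_distr) (auto simp: dX2)
  also have "\<dots> = (\<integral>\<^sup>+y. ennreal (g y) * emeasure (distr M borel Z) ((\<lambda>x. (x, (y, 0::real))) -` Q') \<partial>lborel)"
  proof -
    have m: "(\<lambda>y. emeasure (distr M borel Z) ((\<lambda>x. (x, (y, 0::real))) -` Q')) \<in> borel_measurable borel"
    proof -
      have "(\<lambda>y. emeasure (distr M borel Z) ((\<lambda>x. (x, y)) -` Q')) \<in> borel_measurable (distr M borel ?X2)"
        by (rule PP.measurable_emeasure_Pair2[OF Q''])
      then have "(\<lambda>y. emeasure (distr M borel Z) ((\<lambda>x. (x, y)) -` Q')) \<in> borel_measurable borel"
        by simp
      moreover have "(\<lambda>y::real. (y, 0::real)) \<in> borel_measurable borel" by measurable
      ultimately show ?thesis by (rule measurable_compose[rotated])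
    qed
    show ?thesis unfolding dXb using m gm by (subst nn_integral_density) auto
  qed
  also have "\<dots> = (\<integral>\<^sup>+y. ennreal (g y) * emeasure M {\<omega>\<in>space M. (Z \<omega>, y) \<in> Q} \<partial>lborel)"
  proof (rule nn_integral_cong)
    fix y :: real
    have s: "(\<lambda>x. (x, (y, 0::real))) -` Q' \<in> sets borel" using sets_Pair2[OF Q'm] .
    have "emeasure (distr M borel Z) ((\<lambda>x. (x, (y, 0::real))) -` Q') = emeasure M (Z -` ((\<lambda>x. (x, (y, 0::real))) -` Q') \<inter> space M)"
      by (rule emeasure_distr[OF Zm s])
    also have "Z -` ((\<lambda>x. (x, (y, 0::real))) -` Q') \<inter> space M = {\<omega>\<in>space M. (Z \<omega>, y) \<in> Q}"
      unfolding Q'_def by (auto simp: space_pair_measure)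
    finally show "ennreal (g y) * emeasure (distr M borel Z) ((\<lambda>x. (x, (y, 0::real))) -` Q') = ennreal (g y) * emeasure M {\<omega>\<in>space M. (Z \<omega>, y) \<in> Q}"
      by simp
  qed
  finally show ?thesis .
qed

lemma ar_path_one[simp]: "ar_path \<alpha> e x (Suc 0) = x" by simp

lemma ar_path_Suc: "1 \<le> n \<Longrightarrow> ar_path \<alpha> e x (Suc n) = \<alpha> (Suc n) * ar_path \<alpha> e x n + e (Suc n)"
  by simp

lemma ar_path_cong:
  "(\<And>i. 2 \<le> i \<Longrightarrow> i \<le> n \<Longrightarrow> e i = e' i) \<Longrightarrow> ar_path \<alpha> e x n = ar_path \<alpha> e' x n"
proof (induction n)
  case 0 then show ?case by simp
next
  case (Suc n)
  show ?case
  proof (cases "n = 0")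
    case True then show ?thesis by simp
  next
    case False
    then have "2 \<le> Suc n" by simp
    then show ?thesis using Suc by simp
  qed
qed

lemma ar_meas:
  fixes h :: "real \<Rightarrow> real"
  assumes h: "h \<in> borel_measurable borel" and s: "1 \<le> s"
  shows "n \<le> s \<Longrightarrow> (\<lambda>y. ar_path \<alpha> y (h (y 1)) n) \<in> borel_measurable (PiM {1..s} (\<lambda>_. borel))"
proof (induction n)
  case 0
  have "(\<lambda>y. y 1) \<in> measurable (PiM {1..s} (\<lambda>_. borel)) (borel :: real measure)"
    using s by (intro measurable_component_singleton) auto
  then show ?case using h by simp
next
  case (Suc n)
  show ?case
  proof (cases "n = 0")
    case True
    have "(\<lambda>y. y 1) \<in> measurable (PiM {1..s} (\<lambda>_. borel)) (borel :: real measure)"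
      using s by (intro measurable_component_singleton) auto
    then show ?thesis using h True by simp
  next
    case False
    have IH: "(\<lambda>y. ar_path \<alpha> y (h (y 1)) n) \<in> borel_measurable (PiM {1..s} (\<lambda>_. borel))"
      using Suc by simp
    have c: "(\<lambda>y. y (Suc n)) \<in> measurable (PiM {1..s} (\<lambda>_. borel)) (borel :: real measure)"
      using Suc.prems by (intro measurable_component_singleton) auto
    have "(\<lambda>y. \<alpha> (Suc n) * ar_path \<alpha> y (h (y 1)) n + y (Suc n)) \<in> borel_measurable (PiM {1..s} (\<lambda>_. borel))"
      using IH c by measurable
    then show ?thesis using False by simp
  qed
qed

lemma indep_step:
  fixes \<theta>1 :: "'a \<Rightarrow> real" and \<epsilon> :: "nat \<Rightarrow> 'a \<Rightarrow> real" and h :: "real \<Rightarrow> real"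
  assumes M: "prob_space M"
    and indep: "prob_space.indep_vars M (\<lambda>_. borel) (\<lambda>s. if s = 1 then \<theta>1 else \<epsilon> s) {1..T}"
    and s: "1 \<le> s" "Suc s \<le> T" and h: "h \<in> borel_measurable borel"
  shows "prob_space.indep_var M borel (\<lambda>\<omega>. (ar_path \<alpha> (\<lambda>i. \<epsilon> i \<omega>) (h (\<theta>1 \<omega>)) s, \<theta>1 \<omega>))
                                borel (\<lambda>\<omega>. (\<epsilon> (Suc s) \<omega>, 0::real))"
proof -
  interpret prob_space M by (rule M)
  let ?X = "\<lambda>s. if s = 1 then \<theta>1 else \<epsilon> s"
  have iv: "indep_var (PiM {1..s} (\<lambda>_. borel)) (\<lambda>\<omega>. restrict (\<lambda>i. ?X i \<omega>) {1..s})
                      (PiM {Suc s} (\<lambda>_. borel)) (\<lambda>\<omega>. restrict (\<lambda>i. ?X i \<omega>) {Suc s})"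
    using s by (intro indep_var_restrict[OF indep]) auto
  define Y1 where "Y1 = (\<lambda>y::nat \<Rightarrow> real. (ar_path \<alpha> y (h (y 1)) s, y 1))"
  define Y2 where "Y2 = (\<lambda>y::nat \<Rightarrow> real. (y (Suc s), 0::real))"
  have Y1m: "Y1 \<in> measurable (PiM {1..s} (\<lambda>_. borel)) borel"
  proof -
    have "(\<lambda>y. ar_path \<alpha> y (h (y 1)) s) \<in> borel_measurable (PiM {1..s} (\<lambda>_. borel))"
      using ar_meas[OF h s(1)] by simp
    moreover have "(\<lambda>y. y 1) \<in> measurable (PiM {1..s} (\<lambda>_. borel)) (borel :: real measure)"
      using s by (intro measurable_component_singleton) auto
    ultimately show ?thesis unfolding Y1_def by (intro borel_measurable_Pair)
  qed
  have Y2m: "Y2 \<in> measurable (PiM {Suc s} (\<lambda>_. borel)) borel"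
  proof -
    have "(\<lambda>y. y (Suc s)) \<in> measurable (PiM {Suc s} (\<lambda>_. borel)) (borel :: real measure)"
      by (intro measurable_component_singleton) auto
    then show ?thesis unfolding Y2_def by (intro borel_measurable_Pair) auto
  qed
  have r: "indep_var borel (Y1 \<circ> (\<lambda>\<omega>. restrict (\<lambda>i. ?X i \<omega>) {1..s})) borel (Y2 \<circ> (\<lambda>\<omega>. restrict (\<lambda>i. ?X i \<omega>) {Suc s}))"
    by (rule indep_var_compose[OF iv Y1m Y2m])
  have e1: "Y1 \<circ> (\<lambda>\<omega>. restrict (\<lambda>i. ?X i \<omega>) {1..s}) = (\<lambda>\<omega>. (ar_path \<alpha> (\<lambda>i. \<epsilon> i \<omega>) (h (\<theta>1 \<omega>)) s, \<theta>1 \<omega>))"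
  proof (rule ext)
    fix \<omega>
    have "ar_path \<alpha> (restrict (\<lambda>i. ?X i \<omega>) {1..s}) (h (restrict (\<lambda>i. ?X i \<omega>) {1..s} 1)) s
        = ar_path \<alpha> (\<lambda>i. \<epsilon> i \<omega>) (h (\<theta>1 \<omega>)) s"
      using s by (auto intro!: ar_path_cong)
    then show "(Y1 \<circ> (\<lambda>\<omega>. restrict (\<lambda>i. ?X i \<omega>) {1..s})) \<omega> = (ar_path \<alpha> (\<lambda>i. \<epsilon> i \<omega>) (h (\<theta>1 \<omega>)) s, \<theta>1 \<omega>)"
      unfolding Y1_def using s by simp
  qed
  have e2: "Y2 \<circ> (\<lambda>\<omega>. restrict (\<lambda>i. ?X i \<omega>) {Suc s}) = (\<lambda>\<omega>. (\<epsilon> (Suc s) \<omega>, 0::real))"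
    unfolding Y2_def using s by (auto simp: fun_eq_iff)
  show ?thesis using r unfolding e1 e2 .
qed

lemma dens_facts:
  fixes g :: "real \<Rightarrow> real"
  assumes M: "prob_space M" and dX: "distributed M lborel X (\<lambda>x. ennreal (g x))" and gnn: "\<And>x. 0 \<le> g x"
  shows "integrable lborel g" "integral\<^sup>L lborel g = 1" "g \<in> borel_measurable borel"
proof -
  interpret prob_space M by (rule M)
  have "integrable lborel (\<lambda>x. g x * 1) \<longleftrightarrow> integrable M (\<lambda>x. (\<lambda>_. 1::real) (X x))"
    using gnn by (intro distributed_integrable[OF dX]) auto
  then show "integrable lborel g" by simp
  have "(\<integral>x. g x * 1 \<partial>lborel) = (\<integral>x. (\<lambda>_. 1::real) (X x) \<partial>M)"
    using gnn by (intro distributed_integral[OF dX]) auto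
  then show "integral\<^sup>L lborel g = 1" by (simp add: prob_space)
  show "g \<in> borel_measurable borel" using distributed_real_measurable[of lborel g M X] gnn dX by simp
qed

lemma step_lemma:
  fixes Ys \<theta>1 X :: "'a \<Rightarrow> real" and g :: "real \<Rightarrow> real" and B :: "real set"
  assumes M: "prob_space M"
    and ind: "prob_space.indep_var M borel (\<lambda>\<omega>. (Ys \<omega>, \<theta>1 \<omega>)) borel (\<lambda>\<omega>. (X \<omega>, 0::real))"
    and dX: "distributed M lborel X (\<lambda>x. ennreal (g x))" and gnn: "\<And>x. 0 \<le> g x"
    and B: "B \<in> sets borel" and c: "0 < c"
  shows "measure M {\<omega>\<in>space M. p < c * Ys \<omega> + X \<omega> \<and> \<theta>1 \<omega> \<in> B}
       = (\<integral>e. measure M {\<omega>\<in>space M. (p - e) / c < Ys \<omega> \<and> \<theta>1 \<omega> \<in> B} * g e \<partial>lborel)"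
proof -
  interpret prob_space M by (rule M)
  have Zm: "(\<lambda>\<omega>. (Ys \<omega>, \<theta>1 \<omega>)) \<in> borel_measurable M" using indep_var_rv1[OF ind] .
  have Zm': "(\<lambda>\<omega>. (Ys \<omega>, \<theta>1 \<omega>)) \<in> measurable M (borel \<Otimes>\<^sub>M borel)" using Zm by (simp add: borel_prod)
  have Ysm[measurable]: "Ys \<in> borel_measurable M" and \<theta>m[measurable]: "\<theta>1 \<in> borel_measurable M"
    using measurable_Pair1_compose[OF Zm', OF measurable_ident] measurable_Pair2_compose[OF Zm', OF measurable_ident] by auto
  note gf = dens_facts[OF M dX gnn]
  define F where "F y = measure M {\<omega>\<in>space M. y < Ys \<omega> \<and> \<theta>1 \<omega> \<in> B}" for y
  have Fs: "{\<omega>\<in>space M. y < Ys \<omega> \<and> \<theta>1 \<omega> \<in> B} \<in> sets M" for y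
  proof -
    have "{\<omega>\<in>space M. y < Ys \<omega> \<and> \<theta>1 \<omega> \<in> B} = {\<omega>\<in>space M. y < Ys \<omega>} \<inter> (\<theta>1 -` B \<inter> space M)" by auto
    moreover have "{\<omega>\<in>space M. y < Ys \<omega>} \<in> sets M" by measurable
    moreover have "\<theta>1 -` B \<inter> space M \<in> sets M" by (rule measurable_sets[OF \<theta>m B])
    ultimately show ?thesis by simp
  qed
  have Fmono: "F y \<le> F x" if "x \<le> y" for x y
    unfolding F_def using that Fs by (intro finite_measure_mono) auto
  have Fm: "F \<in> borel_measurable borel" by (rule antimono_meas) (rule Fmono)
  have Fb: "\<bar>F x\<bar> \<le> 1" for x unfolding F_def by simp
  have Fi: "integrable lborel (\<lambda>e. F ((p - e) / c) * g e)" by (rule integ_shift2[OF Fm Fb gf(1) c])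
  define Q where "Q = {((y::real, x::real), e::real). p < c * y + e \<and> x \<in> B}"
  have Q: "Q \<in> sets (borel \<Otimes>\<^sub>M borel)"
  proof -
    have eq: "Q = (\<lambda>z::(real \<times> real) \<times> real. (c * fst (fst z) + snd z, snd (fst z))) -` ({p<..} \<times> B) \<inter> space (borel \<Otimes>\<^sub>M borel)"
      unfolding Q_def by (auto simp: space_pair_measure)
    have fm: "(\<lambda>z::(real \<times> real) \<times> real. (c * fst (fst z) + snd z, snd (fst z))) \<in> measurable (borel \<Otimes>\<^sub>M borel) (borel \<Otimes>\<^sub>M borel)"
      by (simp add: borel_prod[symmetric]) measurable
    have S: "{p<..} \<times> B \<in> sets (borel \<Otimes>\<^sub>M borel)" using B by auto
    show ?thesis unfolding eq by (rule measurable_sets[OF fm S])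
  qed
  have "emeasure M {\<omega>\<in>space M. ((Ys \<omega>, \<theta>1 \<omega>), X \<omega>) \<in> Q}
       = (\<integral>\<^sup>+ e. ennreal (g e) * emeasure M {\<omega>\<in>space M. ((Ys \<omega>, \<theta>1 \<omega>), e) \<in> Q} \<partial>lborel)"
    by (rule indep_emeasure[OF M ind dX Q])
  also have "\<dots> = (\<integral>\<^sup>+ e. ennreal (F ((p - e) / c) * g e) \<partial>lborel)"
  proof (rule nn_integral_cong)
    fix e
    have "{\<omega>\<in>space M. ((Ys \<omega>, \<theta>1 \<omega>), e) \<in> Q} = {\<omega>\<in>space M. (p - e) / c < Ys \<omega> \<and> \<theta>1 \<omega> \<in> B}"
      unfolding Q_def using c by (auto simp: field_simps)
    then show "ennreal (g e) * emeasure M {\<omega>\<in>space M. ((Ys \<omega>, \<theta>1 \<omega>), e) \<in> Q} = ennreal (F ((p - e) / c) * g e)"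
      unfolding F_def using gnn by (simp add: emeasure_eq_measure ennreal_mult mult.commute)
  qed
  also have "\<dots> = ennreal (\<integral>e. F ((p - e) / c) * g e \<partial>lborel)"
    using Fi gnn by (intro nn_integral_eq_integral) (auto simp: F_def)
  finally have "ennreal (measure M {\<omega>\<in>space M. ((Ys \<omega>, \<theta>1 \<omega>), X \<omega>) \<in> Q}) = ennreal (\<integral>e. F ((p - e) / c) * g e \<partial>lborel)"
    by (simp add: emeasure_eq_measure)
  moreover have "0 \<le> (\<integral>e. F ((p - e) / c) * g e \<partial>lborel)"
    using gnn by (intro integral_nonneg_AE AE_I2) (auto simp: F_def)
  ultimately have "measure M {\<omega>\<in>space M. ((Ys \<omega>, \<theta>1 \<omega>), X \<omega>) \<in> Q} = (\<integral>e. F ((p - e) / c) * g e \<partial>lborel)"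
    by simp
  moreover have "{\<omega>\<in>space M. ((Ys \<omega>, \<theta>1 \<omega>), X \<omega>) \<in> Q} = {\<omega>\<in>space M. p < c * Ys \<omega> + X \<omega> \<and> \<theta>1 \<omega> \<in> B}"
    unfolding Q_def by auto
  ultimately show ?thesis unfolding F_def by simp
qed

definition aa :: "'a measure \<Rightarrow> (nat \<Rightarrow> real) \<Rightarrow> (nat \<Rightarrow> 'a \<Rightarrow> real) \<Rightarrow> ('a \<Rightarrow> real) \<Rightarrow> (real \<Rightarrow> real) \<Rightarrow> real set \<Rightarrow> nat \<Rightarrow> real \<Rightarrow> real" where
  "aa M \<alpha> \<epsilon> \<theta>1 h B s y = measure M {\<omega>\<in>space M. y < ar_path \<alpha> (\<lambda>i. \<epsilon> i \<omega>) (h (\<theta>1 \<omega>)) s \<and> \<theta>1 \<omega> \<in> B}"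

lemma good_path:
  fixes \<theta>1 :: "'a \<Rightarrow> real" and \<epsilon> :: "nat \<Rightarrow> 'a \<Rightarrow> real" and g :: "nat \<Rightarrow> real \<Rightarrow> real"
    and hA hR :: "real \<Rightarrow> real"
  assumes M: "prob_space M"
    and indep: "prob_space.indep_vars M (\<lambda>_. borel) (\<lambda>s. if s = 1 then \<theta>1 else \<epsilon> s) {1..T}"
    and d\<epsilon>: "\<forall>s\<in>{2..T}. distributed M lborel (\<epsilon> s) (\<lambda>x. ennreal (g s x))"
    and glc: "\<forall>s\<in>{2..T}. log_concave (g s)"
    and \<alpha>p: "\<forall>s\<in>{2..T}. 0 < \<alpha> s"
    and hA: "hA \<in> borel_measurable borel" and hR: "hR \<in> borel_measurable borel"
    and BA: "BA \<in> sets borel" and BR: "BR \<in> sets borel"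
    and base: "good (aa M \<alpha> \<epsilon> \<theta>1 hA BA 1) (aa M \<alpha> \<epsilon> \<theta>1 hR BR 1) PA PR"
  shows "1 \<le> n \<Longrightarrow> n \<le> T \<Longrightarrow> good (aa M \<alpha> \<epsilon> \<theta>1 hA BA n) (aa M \<alpha> \<epsilon> \<theta>1 hR BR n) PA PR"
proof (induction n)
  case 0 then show ?case by simp
next
  case (Suc n)
  show ?case
  proof (cases "n = 0")
    case True then show ?thesis using base by simp
  next
    case False
    then have n1: "1 \<le> n" and nT: "Suc n \<le> T" using Suc.prems by auto
    have IH: "good (aa M \<alpha> \<epsilon> \<theta>1 hA BA n) (aa M \<alpha> \<epsilon> \<theta>1 hR BR n) PA PR"
      using Suc.IH n1 nT by simp
    have sT: "Suc n \<in> {2..T}" using n1 nT by auto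
    have dX: "distributed M lborel (\<epsilon> (Suc n)) (\<lambda>x. ennreal (g (Suc n) x))" using d\<epsilon> sT by blast
    have lc: "log_concave (g (Suc n))" using glc sT by blast
    have gnn: "\<And>x. 0 \<le> g (Suc n) x" using lc unfolding log_concave_def by blast
    have c: "0 < \<alpha> (Suc n)" using \<alpha>p sT by blast
    note gf = dens_facts[OF M dX gnn]
    have stp: "aa M \<alpha> \<epsilon> \<theta>1 h B (Suc n) = (\<lambda>x. \<integral>e. aa M \<alpha> \<epsilon> \<theta>1 h B n ((x - e) / \<alpha> (Suc n)) * g (Suc n) e \<partial>lborel)"
      if h: "h \<in> borel_measurable borel" and B: "B \<in> sets borel" for h B
    proof (rule ext)
      fix x
      have ind: "prob_space.indep_var M borel (\<lambda>\<omega>. (ar_path \<alpha> (\<lambda>i. \<epsilon> i \<omega>) (h (\<theta>1 \<omega>)) n, \<theta>1 \<omega>))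
                                borel (\<lambda>\<omega>. (\<epsilon> (Suc n) \<omega>, 0::real))"
        by (rule indep_step[OF M indep n1 nT h])
      have "aa M \<alpha> \<epsilon> \<theta>1 h B (Suc n) x = measure M {\<omega>\<in>space M. x < \<alpha> (Suc n) * ar_path \<alpha> (\<lambda>i. \<epsilon> i \<omega>) (h (\<theta>1 \<omega>)) n + \<epsilon> (Suc n) \<omega> \<and> \<theta>1 \<omega> \<in> B}"
        unfolding aa_def using n1 by (simp add: ar_path_Suc del: ar_path.simps)
      also have "\<dots> = (\<integral>e. measure M {\<omega>\<in>space M. (x - e) / \<alpha> (Suc n) < ar_path \<alpha> (\<lambda>i. \<epsilon> i \<omega>) (h (\<theta>1 \<omega>)) n \<and> \<theta>1 \<omega> \<in> B} * g (Suc n) e \<partial>lborel)"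
        by (rule step_lemma[OF M ind dX gnn B c])
      finally show "aa M \<alpha> \<epsilon> \<theta>1 h B (Suc n) x = (\<integral>e. aa M \<alpha> \<epsilon> \<theta>1 h B n ((x - e) / \<alpha> (Suc n)) * g (Suc n) e \<partial>lborel)"
        unfolding aa_def .
    qed
    show ?thesis
      unfolding stp[OF hA BA] stp[OF hR BR]
      by (rule compose_good[OF IH c lc2_of_log_concave[OF lc] gnn gf(1) gf(2)])
  qed
qed

lemma base_good:
  fixes \<theta>1 :: "'a \<Rightarrow> real" and \<epsilon> :: "nat \<Rightarrow> 'a \<Rightarrow> real" and hA hR :: "real \<Rightarrow> real"
  assumes M: "prob_space M" and \<theta>m: "\<theta>1 \<in> borel_measurable M"
    and hA: "hA \<in> borel_measurable borel" and hR: "hR \<in> borel_measurable borel"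
    and BA: "BA \<in> sets borel" and BR: "BR \<in> sets borel"
    and Age: "\<forall>\<omega>\<in>space M. \<theta>1 \<omega> \<in> BA \<longrightarrow> k \<le> hA (\<theta>1 \<omega>)"
    and Rle: "\<forall>\<omega>\<in>space M. \<theta>1 \<omega> \<in> BR \<longrightarrow> hR (\<theta>1 \<omega>) \<le> k"
    and PA: "PA = measure M {\<omega>\<in>space M. \<theta>1 \<omega> \<in> BA}"
    and PR: "PR = measure M {\<omega>\<in>space M. \<theta>1 \<omega> \<in> BR}"
  shows "good (aa M \<alpha> \<epsilon> \<theta>1 hA BA 1) (aa M \<alpha> \<epsilon> \<theta>1 hR BR 1) PA PR"
proof -
  interpret prob_space M by (rule M)
  have sets: "{\<omega>\<in>space M. y < h (\<theta>1 \<omega>) \<and> \<theta>1 \<omega> \<in> B} \<in> sets M"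
    if h: "h \<in> borel_measurable borel" and B: "B \<in> sets borel" for h :: "real \<Rightarrow> real" and B y
  proof -
    have hm: "(\<lambda>\<omega>. h (\<theta>1 \<omega>)) \<in> borel_measurable M" using measurable_compose[OF \<theta>m h] .
    have "{\<omega>\<in>space M. y < h (\<theta>1 \<omega>) \<and> \<theta>1 \<omega> \<in> B} = {\<omega>\<in>space M. y < h (\<theta>1 \<omega>)} \<inter> (\<theta>1 -` B \<inter> space M)" by auto
    moreover have "{\<omega>\<in>space M. y < h (\<theta>1 \<omega>)} \<in> sets M" using hm by measurable
    moreover have "\<theta>1 -` B \<inter> space M \<in> sets M" by (rule measurable_sets[OF \<theta>m B])
    ultimately show ?thesis by simp
  qed
  have setsE: "{\<omega>\<in>space M. \<theta>1 \<omega> \<in> B} \<in> sets M" if B: "B \<in> sets borel" for B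
  proof -
    have "{\<omega>\<in>space M. \<theta>1 \<omega> \<in> B} = \<theta>1 -` B \<inter> space M" by auto
    then show ?thesis using measurable_sets[OF \<theta>m B] by simp
  qed
  define a where "a = aa M \<alpha> \<epsilon> \<theta>1 hA BA 1"
  define r where "r = aa M \<alpha> \<epsilon> \<theta>1 hR BR 1"
  have a_eq: "a y = measure M {\<omega>\<in>space M. y < hA (\<theta>1 \<omega>) \<and> \<theta>1 \<omega> \<in> BA}" for y
    unfolding a_def aa_def by simp
  have r_eq: "r y = measure M {\<omega>\<in>space M. y < hR (\<theta>1 \<omega>) \<and> \<theta>1 \<omega> \<in> BR}" for y
    unfolding r_def aa_def by simp
  have mono: "a y \<le> a x \<and> r y \<le> r x" if "x \<le> y" for x y
    unfolding a_eq r_eq using that sets[OF hA BA] sets[OF hR BR]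
    by (intro conjI finite_measure_mono) auto
  have bnd: "0 \<le> a x \<and> a x \<le> PA \<and> 0 \<le> r x \<and> r x \<le> PR" for x
    unfolding a_eq r_eq PA PR using setsE[OF BA] setsE[OF BR]
    by (intro conjI measure_nonneg finite_measure_mono) auto
  have key: "a q = PA" if "r q \<noteq> 0" for q
  proof -
    have "{\<omega>\<in>space M. q < hR (\<theta>1 \<omega>) \<and> \<theta>1 \<omega> \<in> BR} \<noteq> {}"
    proof
      assume "{\<omega>\<in>space M. q < hR (\<theta>1 \<omega>) \<and> \<theta>1 \<omega> \<in> BR} = {}"
      then show False using that unfolding r_eq by (metis measure_empty)
    qed
    then obtain \<omega> where "\<omega> \<in> space M" "q < hR (\<theta>1 \<omega>)" "\<theta>1 \<omega> \<in> BR" by auto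
    then have qk: "q < k" using Rle by force
    have "{\<omega>\<in>space M. q < hA (\<theta>1 \<omega>) \<and> \<theta>1 \<omega> \<in> BA} = {\<omega>\<in>space M. \<theta>1 \<omega> \<in> BA}"
      using Age qk by force
    then show ?thesis unfolding a_eq PA by simp
  qed
  have tp: "a p * r q \<le> a q * r p" if "p \<le> q" for p q
  proof (cases "r q = 0")
    case True then show ?thesis using bnd[of q] bnd[of p] by simp
  next
    case False
    then have "a q = PA" by (rule key)
    have "a p * r q \<le> PA * r q" using bnd[of p] bnd[of q] by (intro mult_right_mono) auto
    also have "\<dots> = a q * r q" using \<open>a q = PA\<close> by simp
    also have "\<dots> \<le> a q * r p" using bnd[of q] mono[OF that] by (intro mult_left_mono) auto
    finally show ?thesis .
  qed
  have dom: "PA * r q \<le> a q * PR" for q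
  proof (cases "r q = 0")
    case True then show ?thesis using bnd[of q] by simp
  next
    case False
    then have "a q = PA" by (rule key)
    then show ?thesis using bnd[of q] by (simp add: mult_left_mono)
  qed
  show ?thesis unfolding a_def[symmetric] r_def[symmetric] good_def
    using mono bnd tp dom by blast
qed

lemma surv_conv:
  fixes Y :: "'a \<Rightarrow> real"
  assumes M: "prob_space M" and Ym: "Y \<in> borel_measurable M" and E: "E \<in> sets M" and P: "0 < measure M E"
  shows "1 - measure M {\<omega>\<in>space M. Y \<omega> \<le> p \<and> \<omega> \<in> E} / measure M E = measure M {\<omega>\<in>space M. p < Y \<omega> \<and> \<omega> \<in> E} / measure M E"
proof -
  interpret prob_space M by (rule M)
  note Ym[measurable]
  have s1: "{\<omega>\<in>space M. Y \<omega> \<le> p \<and> \<omega> \<in> E} \<in> sets M"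
  proof -
    have "{\<omega>\<in>space M. Y \<omega> \<le> p \<and> \<omega> \<in> E} = {\<omega>\<in>space M. Y \<omega> \<le> p} \<inter> E" by auto
    moreover have "{\<omega>\<in>space M. Y \<omega> \<le> p} \<in> sets M" by measurable
    ultimately show ?thesis using E by simp
  qed
  have s2: "{\<omega>\<in>space M. p < Y \<omega> \<and> \<omega> \<in> E} \<in> sets M"
  proof -
    have "{\<omega>\<in>space M. p < Y \<omega> \<and> \<omega> \<in> E} = {\<omega>\<in>space M. p < Y \<omega>} \<inter> E" by auto
    moreover have "{\<omega>\<in>space M. p < Y \<omega>} \<in> sets M" by measurable
    ultimately show ?thesis using E by simp
  qed
  have "E = {\<omega>\<in>space M. Y \<omega> \<le> p \<and> \<omega> \<in> E} \<union> {\<omega>\<in>space M. p < Y \<omega> \<and> \<omega> \<in> E}"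
    using sets.sets_into_space[OF E] by auto
  then have "measure M E = measure M {\<omega>\<in>space M. Y \<omega> \<le> p \<and> \<omega> \<in> E} + measure M {\<omega>\<in>space M. p < Y \<omega> \<and> \<omega> \<in> E}"
    using s1 s2 by (metis (no_types, lifting) finite_measure_Union disjoint_iff mem_Collect_eq not_le)
  then show ?thesis using P by (simp add: field_simps)
qed

lemma pos_mass:
  fixes \<theta>1 :: "'a \<Rightarrow> real" and f1 :: "real \<Rightarrow> real"
  assumes M: "prob_space M" and d: "distributed M lborel \<theta>1 (\<lambda>x. ennreal (f1 x))"
    and pos: "\<forall>x\<in>{a..b}. 0 < f1 x" and ab: "a < b" and S: "{a<..<b} \<subseteq> S" "S \<in> sets borel"
  shows "0 < measure M {\<omega>\<in>space M. \<theta>1 \<omega> \<in> S}"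
proof -
  interpret prob_space M by (rule M)
  have \<theta>m: "\<theta>1 \<in> borel_measurable M" using distributed_measurable[OF d] by simp
  have fm: "(\<lambda>x. ennreal (f1 x)) \<in> borel_measurable lborel" using distributed_borel_measurable[OF d] .
  have I: "emeasure M (\<theta>1 -` {a<..<b} \<inter> space M) = (\<integral>\<^sup>+x. ennreal (f1 x) * indicator {a<..<b} x \<partial>lborel)"
    by (rule distributed_emeasure[OF d]) simp
  have "(\<integral>\<^sup>+x. ennreal (f1 x) * indicator {a<..<b} x \<partial>lborel) \<noteq> 0"
  proof
    assume "(\<integral>\<^sup>+x. ennreal (f1 x) * indicator {a<..<b} x \<partial>lborel) = 0"
    then have "AE x in lborel. ennreal (f1 x) * indicator {a<..<b} x = 0"
      using fm by (subst (asm) nn_integral_0_iff_AE) auto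
    then have "AE x in lborel. x \<notin> {a<..<b}"
    proof (rule AE_mp, intro AE_I2 impI)
      fix x assume h: "ennreal (f1 x) * indicator {a<..<b} x = 0"
      show "x \<notin> {a<..<b}"
      proof
        assume x: "x \<in> {a<..<b}"
        then have "0 < f1 x" using pos by auto
        then show False using h x by (simp add: ennreal_eq_0_iff)
      qed
    qed
    then have "emeasure lborel {a<..<b} = 0"
      by (subst (asm) AE_iff_measurable[of "{a<..<b}"]) auto
    then show False using ab by simp
  qed
  then have "0 < emeasure M (\<theta>1 -` {a<..<b} \<inter> space M)" using I by (simp add: zero_less_iff_neq_zero)
  also have "\<dots> \<le> emeasure M {\<omega>\<in>space M. \<theta>1 \<omega> \<in> S}"
  proof (rule emeasure_mono)
    show "\<theta>1 -` {a<..<b} \<inter> space M \<subseteq> {\<omega> \<in> space M. \<theta>1 \<omega> \<in> S}" using S by auto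
    have "{\<omega> \<in> space M. \<theta>1 \<omega> \<in> S} = \<theta>1 -` S \<inter> space M" by auto
    then show "{\<omega> \<in> space M. \<theta>1 \<omega> \<in> S} \<in> sets M" using measurable_sets[OF \<theta>m S(2)] by simp
  qed
  finally show ?thesis by (simp add: emeasure_eq_measure)
qed

lemma final_from_good:
  fixes a r FA FR :: "real \<Rightarrow> real"
  assumes good: "good a r PA PR" and PA: "0 < PA" and PR: "0 < PR"
    and FA: "\<And>p. 1 - FA p = a p / PA" and FR: "\<And>p. 1 - FR p = r p / PR"
    and pA: "monopoly_price FA pA" and pR: "monopoly_price FR pR"
  shows "pR \<le> pA"
proof -
  have mono: "\<And>x y. x \<le> y \<Longrightarrow> a y \<le> a x \<and> r y \<le> r x"
    and bnd: "\<And>x. 0 \<le> a x \<and> a x \<le> PA \<and> 0 \<le> r x \<and> r x \<le> PR"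
    and tp: "\<And>p q. p \<le> q \<Longrightarrow> a p * r q \<le> a q * r p"
    and dom: "\<And>q. PA * r q \<le> a q * PR"
    using good unfolding good_def by auto
  define SA where "SA p = 1 - FA p" for p
  define SR where "SR p = 1 - FR p" for p
  have SA: "SA p = a p / PA" for p unfolding SA_def FA ..
  have SR: "SR p = r p / PR" for p unfolding SR_def FR ..
  show ?thesis
  proof (rule revenue_lemma[of SA SR])
    show "SA y \<le> SA x" if "x \<le> y" for x y unfolding SA using mono[OF that] PA by (simp add: divide_right_mono)
    show "0 \<le> SA x" for x unfolding SA using bnd[of x] PA by simp
    show "0 \<le> SR x" for x unfolding SR using bnd[of x] PR by simp
    show "SA p * SR q \<le> SA q * SR p" if "p \<le> q" for p q
    proof -
      have "a p * r q / (PA * PR) \<le> a q * r p / (PA * PR)"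
        using tp[OF that] PA PR by (simp add: divide_right_mono)
      then show ?thesis unfolding SA SR by (simp add: field_simps)
    qed
    show "SR q \<le> SA q" for q
    proof -
      have "PA * r q / (PA * PR) \<le> a q * PR / (PA * PR)"
        by (intro divide_right_mono) (use dom[of q] PA PR in auto)
      moreover have "PA * r q / (PA * PR) = r q / PR" using PA by simp
      moreover have "a q * PR / (PA * PR) = a q / PA" using PR by simp
      ultimately show ?thesis unfolding SA SR by simp
    qed
    show "q * SA q \<le> pA * SA pA" for q
      using pA unfolding monopoly_price_def revenue_maximizer_def SA_def by blast
    show "q * SR q \<le> pR * SR pR" for q
      using pR unfolding monopoly_price_def revenue_maximizer_def SR_def by blast
    show "pR \<le> q" if "\<forall>x. x * SR x \<le> q * SR q" for q
      using pR that unfolding monopoly_price_def revenue_maximizer_def SR_def by blast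
  qed
qed

lemma ar_meas_M:
  fixes \<theta>1 :: "'a \<Rightarrow> real" and \<epsilon> :: "nat \<Rightarrow> 'a \<Rightarrow> real" and h :: "real \<Rightarrow> real"
  assumes \<theta>m: "\<theta>1 \<in> borel_measurable M" and \<epsilon>m: "\<forall>s\<in>{2..T}. \<epsilon> s \<in> borel_measurable M"
    and h: "h \<in> borel_measurable borel"
  shows "n \<le> T \<Longrightarrow> (\<lambda>\<omega>. ar_path \<alpha> (\<lambda>i. \<epsilon> i \<omega>) (h (\<theta>1 \<omega>)) n) \<in> borel_measurable M"
proof (induction n)
  case 0 then show ?case using measurable_compose[OF \<theta>m h] by simp
next
  case (Suc n)
  show ?case
  proof (cases "n = 0")
    case True then show ?thesis using measurable_compose[OF \<theta>m h] by simp
  next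
    case False
    have IH: "(\<lambda>\<omega>. ar_path \<alpha> (\<lambda>i. \<epsilon> i \<omega>) (h (\<theta>1 \<omega>)) n) \<in> borel_measurable M" using Suc by simp
    have e: "\<epsilon> (Suc n) \<in> borel_measurable M" using \<epsilon>m Suc.prems False by auto
    have "(\<lambda>\<omega>. \<alpha> (Suc n) * ar_path \<alpha> (\<lambda>i. \<epsilon> i \<omega>) (h (\<theta>1 \<omega>)) n + \<epsilon> (Suc n) \<omega>) \<in> borel_measurable M"
      using IH e by measurable
    then show ?thesis using False by simp
  qed
qed


theorem lemma7:
  fixes M :: "'a measure"
    and \<theta>1 :: "'a \<Rightarrow> real" and \<epsilon> :: "nat \<Rightarrow> 'a \<Rightarrow> real"
    and f1 :: "real \<Rightarrow> real" and g :: "nat \<Rightarrow> real \<Rightarrow> real"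
    and lo hi \<delta> k pA pR :: real and \<alpha> :: "nat \<Rightarrow> real" and T t :: nat
    and FA FR :: "real \<Rightarrow> real"
  assumes M: "prob_space M"
    and supp1: "0 \<le> lo" "lo < hi"
    and dist1: "distributed M lborel \<theta>1 (\<lambda>x. ennreal (f1 x))"
    and f1_pos: "\<forall>x\<in>{lo..hi}. 0 < f1 x"
    and f1_zero: "\<forall>x. x \<notin> {lo..hi} \<longrightarrow> f1 x = 0"
    and f1_lc: "log_concave f1"
    and \<delta>: "0 < \<delta>" "\<delta> \<le> 1"
    and \<alpha>: "\<forall>s\<in>{2..T}. 0 < \<alpha> s \<and> \<alpha> s < 1 / (2 * \<delta>)"
    and dist\<epsilon>: "\<forall>s\<in>{2..T}. distributed M lborel (\<epsilon> s) (\<lambda>x. ennreal (g s x))"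
    and g_lc: "\<forall>s\<in>{2..T}. log_concave (g s)"
    and g_bdd: "\<forall>s\<in>{2..T}. \<exists>a b. \<forall>x. x \<notin> {a..b} \<longrightarrow> g s x = 0"
    and indep: "prob_space.indep_vars M (\<lambda>_. borel)
                  (\<lambda>s. if s = 1 then \<theta>1 else \<epsilon> s) {1..T}"
    and k: "lo \<le> k" "k \<le> hi"
    and t: "2 \<le> t" "t \<le> T"
    and FA: "FA = (\<lambda>p. if k < hi
          then measure M {\<omega>\<in>space M. ar_path \<alpha> (\<lambda>s. \<epsilon> s \<omega>) (\<theta>1 \<omega>) t \<le> p \<and> k \<le> \<theta>1 \<omega>}
               / measure M {\<omega>\<in>space M. k \<le> \<theta>1 \<omega>}
          else measure M {\<omega>\<in>space M. ar_path \<alpha> (\<lambda>s. \<epsilon> s \<omega>) hi t \<le> p})"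
    and FR: "FR = (\<lambda>p. if lo < k
          then measure M {\<omega>\<in>space M. ar_path \<alpha> (\<lambda>s. \<epsilon> s \<omega>) (\<theta>1 \<omega>) t \<le> p \<and> \<theta>1 \<omega> < k}
               / measure M {\<omega>\<in>space M. \<theta>1 \<omega> < k}
          else measure M {\<omega>\<in>space M. ar_path \<alpha> (\<lambda>s. \<epsilon> s \<omega>) lo t \<le> p})"
    and pA: "monopoly_price FA pA"
    and pR: "monopoly_price FR pR"
  shows "pR \<le> pA"
proof -
  interpret prob_space M by (rule M)
  have \<theta>m[measurable]: "\<theta>1 \<in> borel_measurable M" using distributed_measurable[OF dist1] by simp
  have \<epsilon>m: "\<forall>s\<in>{2..T}. \<epsilon> s \<in> borel_measurable M"
  proof
    fix s assume "s \<in> {2..T}"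
    then have "distributed M lborel (\<epsilon> s) (\<lambda>x. ennreal (g s x))" using dist\<epsilon> by blast
    then show "\<epsilon> s \<in> borel_measurable M" using distributed_measurable by fastforce
  qed
  have sp: "\<And>P. {\<omega>\<in>space M. P \<omega> \<and> \<omega> \<in> space M} = {\<omega>\<in>space M. P \<omega>}" by auto
  define hA where "hA = (if k < hi then (\<lambda>x::real. x) else (\<lambda>_. hi))"
  define BA where "BA = (if k < hi then {k..} else (UNIV::real set))"
  define hR where "hR = (if lo < k then (\<lambda>x::real. x) else (\<lambda>_. lo))"
  define BR where "BR = (if lo < k then {..<k} else (UNIV::real set))"
  have hAm: "hA \<in> borel_measurable borel" unfolding hA_def by auto
  have hRm: "hR \<in> borel_measurable borel" unfolding hR_def by auto
  have BAs: "BA \<in> sets borel" unfolding BA_def by auto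
  have BRs: "BR \<in> sets borel" unfolding BR_def by auto
  define PA where "PA = measure M {\<omega>\<in>space M. \<theta>1 \<omega> \<in> BA}"
  define PR where "PR = measure M {\<omega>\<in>space M. \<theta>1 \<omega> \<in> BR}"
  have base: "good (aa M \<alpha> \<epsilon> \<theta>1 hA BA 1) (aa M \<alpha> \<epsilon> \<theta>1 hR BR 1) PA PR"
  proof (rule base_good[OF M \<theta>m hAm hRm BAs BRs _ _ PA_def PR_def])
    show "\<forall>\<omega>\<in>space M. \<theta>1 \<omega> \<in> BA \<longrightarrow> k \<le> hA (\<theta>1 \<omega>)" using k unfolding hA_def BA_def by auto
    show "\<forall>\<omega>\<in>space M. \<theta>1 \<omega> \<in> BR \<longrightarrow> hR (\<theta>1 \<omega>) \<le> k" using k unfolding hR_def BR_def by auto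
  qed
  have \<alpha>p: "\<forall>s\<in>{2..T}. 0 < \<alpha> s" using \<alpha> by auto
  have gp: "good (aa M \<alpha> \<epsilon> \<theta>1 hA BA t) (aa M \<alpha> \<epsilon> \<theta>1 hR BR t) PA PR"
    using good_path[OF M indep dist\<epsilon> g_lc \<alpha>p hAm hRm BAs BRs base] t by simp
  have PA0: "0 < PA"
  proof (cases "k < hi")
    case True
    have "0 < measure M {\<omega>\<in>space M. \<theta>1 \<omega> \<in> {k..}}"
      using f1_pos k True by (intro pos_mass[OF M dist1, of k hi]) auto
    then show ?thesis unfolding PA_def BA_def using True by simp
  next
    case False
    then show ?thesis unfolding PA_def BA_def by (simp add: prob_space)
  qed
  have PR0: "0 < PR"
  proof (cases "lo < k")
    case True
    have "0 < measure M {\<omega>\<in>space M. \<theta>1 \<omega> \<in> {..<k}}"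
      using f1_pos k True by (intro pos_mass[OF M dist1, of lo k]) auto
    then show ?thesis unfolding PR_def BR_def using True by simp
  next
    case False
    then show ?thesis unfolding PR_def BR_def by (simp add: prob_space)
  qed
  have YAm: "(\<lambda>\<omega>. ar_path \<alpha> (\<lambda>i. \<epsilon> i \<omega>) (hA (\<theta>1 \<omega>)) t) \<in> borel_measurable M"
    using ar_meas_M[OF \<theta>m \<epsilon>m hAm] t by simp
  have YRm: "(\<lambda>\<omega>. ar_path \<alpha> (\<lambda>i. \<epsilon> i \<omega>) (hR (\<theta>1 \<omega>)) t) \<in> borel_measurable M"
    using ar_meas_M[OF \<theta>m \<epsilon>m hRm] t by simp
  have FAeq: "1 - FA p = aa M \<alpha> \<epsilon> \<theta>1 hA BA t p / PA" for p
  proof (cases "k < hi")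
    case True
    define E where "E = {\<omega>\<in>space M. k \<le> \<theta>1 \<omega>}"
    have Es: "E \<in> sets M" unfolding E_def by measurable
    have PE: "PA = measure M E" unfolding PA_def E_def BA_def using True by simp
    have "1 - measure M {\<omega>\<in>space M. ar_path \<alpha> (\<lambda>i. \<epsilon> i \<omega>) (hA (\<theta>1 \<omega>)) t \<le> p \<and> \<omega> \<in> E} / measure M E
        = measure M {\<omega>\<in>space M. p < ar_path \<alpha> (\<lambda>i. \<epsilon> i \<omega>) (hA (\<theta>1 \<omega>)) t \<and> \<omega> \<in> E} / measure M E"
      using PA0 PE by (intro surv_conv[OF M YAm Es]) simp
    moreover have "{\<omega>\<in>space M. ar_path \<alpha> (\<lambda>i. \<epsilon> i \<omega>) (hA (\<theta>1 \<omega>)) t \<le> p \<and> \<omega> \<in> E}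
       = {\<omega>\<in>space M. ar_path \<alpha> (\<lambda>s. \<epsilon> s \<omega>) (\<theta>1 \<omega>) t \<le> p \<and> k \<le> \<theta>1 \<omega>}"
      unfolding E_def hA_def using True by auto
    moreover have "{\<omega>\<in>space M. p < ar_path \<alpha> (\<lambda>i. \<epsilon> i \<omega>) (hA (\<theta>1 \<omega>)) t \<and> \<omega> \<in> E}
       = {\<omega>\<in>space M. p < ar_path \<alpha> (\<lambda>i. \<epsilon> i \<omega>) (hA (\<theta>1 \<omega>)) t \<and> \<theta>1 \<omega> \<in> BA}"
      unfolding E_def BA_def using True by auto
    ultimately show ?thesis unfolding FA aa_def PE using True by (simp add: E_def)
  next
    case False
    have PE: "PA = 1" unfolding PA_def BA_def using False by (simp add: prob_space)
    have Es: "space M \<in> sets M" by simp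
    have "1 - measure M {\<omega>\<in>space M. ar_path \<alpha> (\<lambda>i. \<epsilon> i \<omega>) (hA (\<theta>1 \<omega>)) t \<le> p \<and> \<omega> \<in> space M} / measure M (space M)
        = measure M {\<omega>\<in>space M. p < ar_path \<alpha> (\<lambda>i. \<epsilon> i \<omega>) (hA (\<theta>1 \<omega>)) t \<and> \<omega> \<in> space M} / measure M (space M)"
      by (intro surv_conv[OF M YAm Es]) (simp add: prob_space)
    then show ?thesis unfolding FA aa_def PE using False by (simp add: hA_def BA_def prob_space sp)
  qed
  have FReq: "1 - FR p = aa M \<alpha> \<epsilon> \<theta>1 hR BR t p / PR" for p
  proof (cases "lo < k")
    case True
    define E where "E = {\<omega>\<in>space M. \<theta>1 \<omega> < k}"
    have Es: "E \<in> sets M" unfolding E_def by measurable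
    have PE: "PR = measure M E" unfolding PR_def E_def BR_def using True by simp
    have "1 - measure M {\<omega>\<in>space M. ar_path \<alpha> (\<lambda>i. \<epsilon> i \<omega>) (hR (\<theta>1 \<omega>)) t \<le> p \<and> \<omega> \<in> E} / measure M E
        = measure M {\<omega>\<in>space M. p < ar_path \<alpha> (\<lambda>i. \<epsilon> i \<omega>) (hR (\<theta>1 \<omega>)) t \<and> \<omega> \<in> E} / measure M E"
      using PR0 PE by (intro surv_conv[OF M YRm Es]) simp
    moreover have "{\<omega>\<in>space M. ar_path \<alpha> (\<lambda>i. \<epsilon> i \<omega>) (hR (\<theta>1 \<omega>)) t \<le> p \<and> \<omega> \<in> E}
       = {\<omega>\<in>space M. ar_path \<alpha> (\<lambda>s. \<epsilon> s \<omega>) (\<theta>1 \<omega>) t \<le> p \<and> \<theta>1 \<omega> < k}"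
      unfolding E_def hR_def using True by auto
    moreover have "{\<omega>\<in>space M. p < ar_path \<alpha> (\<lambda>i. \<epsilon> i \<omega>) (hR (\<theta>1 \<omega>)) t \<and> \<omega> \<in> E}
       = {\<omega>\<in>space M. p < ar_path \<alpha> (\<lambda>i. \<epsilon> i \<omega>) (hR (\<theta>1 \<omega>)) t \<and> \<theta>1 \<omega> \<in> BR}"
      unfolding E_def BR_def using True by auto
    ultimately show ?thesis unfolding FR aa_def PE using True by (simp add: E_def)
  next
    case False
    have PE: "PR = 1" unfolding PR_def BR_def using False by (simp add: prob_space)
    have Es: "space M \<in> sets M" by simp
    have "1 - measure M {\<omega>\<in>space M. ar_path \<alpha> (\<lambda>i. \<epsilon> i \<omega>) (hR (\<theta>1 \<omega>)) t \<le> p \<and> \<omega> \<in> space M} / measure M (space M)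
        = measure M {\<omega>\<in>space M. p < ar_path \<alpha> (\<lambda>i. \<epsilon> i \<omega>) (hR (\<theta>1 \<omega>)) t \<and> \<omega> \<in> space M} / measure M (space M)"
      by (intro surv_conv[OF M YRm Es]) (simp add: prob_space)
    then show ?thesis unfolding FR aa_def PE using False by (simp add: hR_def BR_def prob_space sp)
  qed
  show ?thesis by (rule final_from_good[OF gp PA0 PR0 FAeq FReq pA pR])
qed

end
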